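(* There exists an instance $(x,b)$ (for example $x=(\frac14,\frac34,\frac34)$, $b=(2,1,1)$) such that both the optimal \textsc{Set Once Strip Cover} lifetime and the optimal \textsc{Strip Cover} lifetime of $(x,b)$ are at least $\frac{3}{2}$ times the lifetime of every duty cycle schedule for $(x,b)$. Consequently, the approximation ratio of any duty cycle algorithm is at least $\frac32$ for both \textsc{Set Once Strip Cover} and \textsc{Strip Cover}.
   Context: Instances: $(x,b)$ with sensor locations $x=(x_1,\ldots,x_n)\in[0,1]^n$ and battery charges $b_i\ge0$. A sensor $i$ assigned radius $\rho_i>0$ covers $[x_i-\rho_i,x_i+\rho_i]$ and its battery lasts $b_i/\rho_i$ time units while active. In \textsc{Set Once Strip Cover}, each sensor gets a radius $\rho_i\in[0,1]$ and an activation time $\tau_i\ge0$, set once, and covers $[x_i-\rho_i,x_i+\rho_i]$ during $[\tau_i,\tau_i+b_i/\rho_i]$; the lifetime is the maximum $T$ such that every point of $[0,1]\times[0,T]$ is covered by some active sensor. In \textsc{Strip Cover}, each sensor's radius is a piecewise constant function $\rho_i(t)\ge0$ with finitely many pieces and $\int_0^\infty\rho_i(t)\,dt\le b_i$; the lifetime is the maximum $T$ with $[0,1]\subseteq\bigcup_i[x_i-\rho_i(t),x_i+\rho_i(t)]$ for all $t\in[0,T]$. A duty cycle schedule partitions the sensors into shifts $S_1,\ldots,S_m$ which work one after another, each shift by itself: the sensors of a shift are activated simultaneously when the shift starts, with radii fixed for the shift, and the shift lasts as long as its sensors alone cover $[0,1]$; thus the duration of shift $S$ is the optimal \textsc{Set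 Radius Strip Cover} lifetime $L(S)$ of the sub-instance consisting of the sensors in $S$ (the maximum $T$ such that for some radii $\rho$ on $S$, for all $t\in[0,T]$, $[0,1]\subseteq\bigcup_{i\in S:\rho_i>0,\,b_i/\rho_i\ge t}[x_i-\rho_i,x_i+\rho_i]$), and the lifetime of the duty cycle schedule is $\sum_{j}L(S_j)$. \textsc{RoundRobin} is the duty cycle algorithm with singleton shifts. *)

theory Defs
  imports "HOL-Analysis.Analysis" "HOL-Library.Disjoint_Sets"
begin

text \<open>An instance consists of n sensors indexed by 0..n-1, with locations x i and
  battery charges b i.\<close>

text \<open>Sensor i with radius rho i > 0 and activation time tau i covers
  [x i - rho i, x i + rho i] during [tau i, tau i + b i / rho i].
  A sensor with radius 0 is inactive.\<close>

definition so_covers ::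
  "nat \<Rightarrow> (nat \<Rightarrow> real) \<Rightarrow> (nat \<Rightarrow> real) \<Rightarrow> (nat \<Rightarrow> real) \<Rightarrow> (nat \<Rightarrow> real) \<Rightarrow> real \<Rightarrow> bool"
where
  "so_covers n x b rho tau T \<longleftrightarrow>
     (\<forall>t\<in>{0..T}. \<forall>p\<in>{0..1}. \<exists>i<n. 0 < rho i \<and> \<bar>p - x i\<bar> \<le> rho i
        \<and> tau i \<le> t \<and> t \<le> tau i + b i / rho i)"

definition so_lifetime ::
  "nat \<Rightarrow> (nat \<Rightarrow> real) \<Rightarrow> (nat \<Rightarrow> real) \<Rightarrow> (nat \<Rightarrow> real) \<Rightarrow> (nat \<Rightarrow> real) \<Rightarrow> real"
where
  "so_lifetime n x b rho tau = Sup (insert 0 {T. 0 \<le> T \<and> so_covers n x b rho tau T})"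

definition so_feasible :: "nat \<Rightarrow> (nat \<Rightarrow> real) \<Rightarrow> (nat \<Rightarrow> real) \<Rightarrow> bool" where
  "so_feasible n rho tau \<longleftrightarrow> (\<forall>i<n. 0 \<le> rho i \<and> rho i \<le> 1 \<and> 0 \<le> tau i)"

definition opt_set_once :: "nat \<Rightarrow> (nat \<Rightarrow> real) \<Rightarrow> (nat \<Rightarrow> real) \<Rightarrow> real" where
  "opt_set_once n x b = Sup {so_lifetime n x b rho tau | rho tau. so_feasible n rho tau}"

text \<open>Piecewise constant function on [0,\<infinity>) with finitely many pieces: there is a finite
  set B of breakpoints such that f is constant on every interval [s,t] \<subseteq> [0,\<infinity>) whose
  half-open part (s,t] contains no breakpoint (pieces are of the form [t_j, t_{j+1})).\<close>

definition piecewise_const :: "(real \<Rightarrow> real) \<Rightarrow> bool" where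
  "piecewise_const f \<longleftrightarrow> (\<exists>B. finite B \<and>
     (\<forall>s t. 0 \<le> s \<and> s \<le> t \<and> (\<forall>u\<in>B. \<not> (s < u \<and> u \<le> t)) \<longrightarrow> f s = f t))"

definition sc_feasible :: "nat \<Rightarrow> (nat \<Rightarrow> real) \<Rightarrow> (nat \<Rightarrow> real \<Rightarrow> real) \<Rightarrow> bool" where
  "sc_feasible n b rho \<longleftrightarrow> (\<forall>i<n. piecewise_const (rho i) \<and> (\<forall>t\<ge>0. 0 \<le> rho i t)
      \<and> (\<exists>I. (rho i has_integral I) {0..} \<and> I \<le> b i))"

definition sc_covers :: "nat \<Rightarrow> (nat \<Rightarrow> real) \<Rightarrow> (nat \<Rightarrow> real \<Rightarrow> real) \<Rightarrow> real \<Rightarrow> bool" where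
  "sc_covers n x rho T \<longleftrightarrow>
     (\<forall>t\<in>{0..T}. \<forall>p\<in>{0..1}. \<exists>i<n. \<bar>p - x i\<bar> \<le> rho i t)"

definition sc_lifetime :: "nat \<Rightarrow> (nat \<Rightarrow> real) \<Rightarrow> (nat \<Rightarrow> real \<Rightarrow> real) \<Rightarrow> real" where
  "sc_lifetime n x rho = Sup (insert 0 {T. 0 \<le> T \<and> sc_covers n x rho T})"

definition opt_strip_cover :: "nat \<Rightarrow> (nat \<Rightarrow> real) \<Rightarrow> (nat \<Rightarrow> real) \<Rightarrow> real" where
  "opt_strip_cover n x b = Sup {sc_lifetime n x rho | rho. sc_feasible n b rho}"

definition sr_covers :: "nat set \<Rightarrow> (nat \<Rightarrow> real) \<Rightarrow> (nat \<Rightarrow> real) \<Rightarrow> (nat \<Rightarrow> real) \<Rightarrow> real \<Rightarrow> bool" where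
  "sr_covers S x b rho T \<longleftrightarrow>
     (\<forall>t\<in>{0..T}. \<forall>p\<in>{0..1}. \<exists>i\<in>S. 0 < rho i \<and> t \<le> b i / rho i \<and> \<bar>p - x i\<bar> \<le> rho i)"

definition shift_lifetime :: "nat set \<Rightarrow> (nat \<Rightarrow> real) \<Rightarrow> (nat \<Rightarrow> real) \<Rightarrow> real" where
  "shift_lifetime S x b = Sup (insert 0 {T. 0 \<le> T \<and>
      (\<exists>rho. (\<forall>i\<in>S. 0 \<le> rho i) \<and> sr_covers S x b rho T)})"

text \<open>A duty cycle schedule is a partition P of the sensors {0..<n} into shifts;
  its lifetime is the sum of the shift lifetimes.\<close>
definition duty_cycle_lifetime :: "nat set set \<Rightarrow> (nat \<Rightarrow> real) \<Rightarrow> (nat \<Rightarrow> real) \<Rightarrow> real" where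
  "duty_cycle_lifetime P x b = (\<Sum>S\<in>P. shift_lifetime S x b)"

definition ex_x :: "nat \<Rightarrow> real" where
  "ex_x i = [1/4, 3/4, 3/4] ! i"

definition ex_b :: "nat \<Rightarrow> real" where
  "ex_b i = [2, 1, 1] ! i"

end

theory Submission imports Defs begin

lemma exx: "ex_x 0 = 1/4" "ex_x 1 = 3/4" "ex_x 2 = 3/4" "ex_x (Suc 0) = 3/4" "ex_x (Suc (Suc 0)) = 3/4"
  by (simp_all add: ex_x_def)
lemma exb: "ex_b 0 = 2" "ex_b 1 = 1" "ex_b 2 = 1" "ex_b (Suc 0) = 1" "ex_b (Suc (Suc 0)) = 1"
  by (simp_all add: ex_b_def)
lemma lt3: "(i::nat) < 3 \<longleftrightarrow> i = 0 \<or> i = 1 \<or> i = 2" by auto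

lemma cover_len:
  fixes c :: "nat \<Rightarrow> real"
  assumes "0 \<le> T" "0 \<le> L" "{0..T} \<subseteq> (\<Union>i<n. {c i .. c i + L})"
  shows "T \<le> real n * L"
proof -
  have "ennreal T = emeasure lborel {0..T}" using assms by simp
  also have "\<dots> \<le> emeasure lborel (\<Union>i<n. {c i .. c i + L})"
    by (rule emeasure_mono[OF assms(3)]) auto
  also have "\<dots> \<le> (\<Sum>i<n. emeasure lborel {c i .. c i + L})"
    by (rule emeasure_subadditive_finite) auto
  also have "\<dots> = (\<Sum>i<n. ennreal L)" using assms by simp
  also have "\<dots> = ennreal (real n * L)" using assms by (simp add: ennreal_mult ennreal_of_nat_eq_real_of_nat)
  finally show ?thesis using assms by (auto simp add: ennreal_le_iff2)
qed

lemma so_bound: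
  assumes "so_covers 3 ex_x ex_b rho tau T" "0 \<le> T"
  shows "T \<le> 24"
proof -
  have "{0..T} \<subseteq> (\<Union>i<3. {tau i .. tau i + 8})"
  proof
    fix t assume t: "t \<in> {0..T}"
    then obtain i where i: "i < 3" "0 < rho i" "\<bar>0 - ex_x i\<bar> \<le> rho i" "tau i \<le> t"
       "t \<le> tau i + ex_b i / rho i"
      using assms(1) unfolding so_covers_def by fastforce
    have "rho i \<ge> 1/4" "ex_b i \<le> 2" "0 \<le> ex_b i" using i(1,3) by (auto simp: lt3 exx exb abs_le_iff split: abs_split)
    hence "ex_b i / rho i \<le> 2 / (1/4)"
      by (intro frac_le) auto
    thus "t \<in> (\<Union>i<3. {tau i .. tau i + 8})" using i by auto
  qed
  from cover_len[OF assms(2) _ this] show ?thesis by simp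
qed

lemma sc_bound:
  assumes f: "sc_feasible 3 ex_b rho" and c: "sc_covers 3 ex_x rho T" and T: "0 \<le> T"
  shows "T \<le> 16"
proof -
  have "\<forall>i. \<exists>I. i < 3 \<longrightarrow> (rho i has_integral I) {0..} \<and> I \<le> ex_b i"
    using f unfolding sc_feasible_def by blast
  then obtain I where I: "\<And>i. i < 3 \<Longrightarrow> (rho i has_integral I i) {0..} \<and> I i \<le> ex_b i"
    by metis
  have nn: "\<And>i t. i < 3 \<Longrightarrow> 0 \<le> t \<Longrightarrow> 0 \<le> rho i t"
    using f unfolding sc_feasible_def by blast
  have fi: "((\<lambda>t. \<Sum>i<3. rho i t) has_integral (\<Sum>i<3. I i)) {0..}"
    by (rule has_integral_sum) (use I in auto)
  note has_integral_const_real[of "1/4::real" 0 T]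
  hence hi: "((\<lambda>t. if t \<in> {0..T} then 1/4 else 0) has_integral (T/4)) {0..}"
    using T by (subst has_integral_restrict) auto
  have "T/4 \<le> (\<Sum>i<3. I i)"
  proof (rule has_integral_le[OF hi fi])
    fix t :: real assume t: "t \<in> {0..}"
    show "(if t \<in> {0..T} then 1/4 else 0) \<le> (\<Sum>i<3. rho i t)"
    proof (cases "t \<in> {0..T}")
      case True
      then obtain i where i: "i < 3" "\<bar>0 - ex_x i\<bar> \<le> rho i t"
        using c unfolding sc_covers_def by fastforce
      have "1/4 \<le> rho i t" using i by (auto simp: lt3 exx)
      also have "\<dots> \<le> (\<Sum>i<3. rho i t)"
        by (rule member_le_sum) (use i t nn in auto)
      finally show ?thesis using True by simp
    next
      case False
      thus ?thesis using t nn by (auto intro: sum_nonneg)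
    qed
  qed
  also have "\<dots> \<le> (\<Sum>i<3. ex_b i)" by (rule sum_mono) (use I in auto)
  also have "\<dots> = 4" by (simp add: numeral_3_eq_3 exb)
  finally show ?thesis by simp
qed

definition w :: "nat \<Rightarrow> real" where "w i = [8/3, 4/3, 4/3] ! i"
lemma ww: "w 0 = 8/3" "w 1 = 4/3" "w 2 = 4/3" "w (Suc 0) = 4/3" "w (Suc (Suc 0)) = 4/3"
  by (simp_all add: w_def)

lemma div_helper: "(0::real) \<le> b \<Longrightarrow> 0 < c \<Longrightarrow> c \<le> r \<Longrightarrow> T \<le> b / r \<Longrightarrow> T \<le> b / c"
  by (meson divide_left_mono dual_order.trans mult_pos_pos order_less_le_trans)

lemma shift_elem_bound:
  assumes S: "S \<subseteq> {..<3}"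
  and TT: "T \<in> insert 0 {T. 0 \<le> T \<and> (\<exists>rho. (\<forall>i\<in>S. 0 \<le> rho i) \<and> sr_covers S ex_x ex_b rho T)}"
  shows "T \<le> (\<Sum>i\<in>S. w i)"
proof -
  have fS: "finite S" using S finite_subset by blast
  have wnn: "0 \<le> w i" if "i \<in> S" for i
  proof -
    have "i = 0 \<or> i = 1 \<or> i = 2" using that S by auto
    thus ?thesis by (auto simp: ww)
  qed
  have s0: "0 \<le> (\<Sum>i\<in>S. w i)" by (rule sum_nonneg) (use wnn in auto)
  have wle: "\<And>i. i \<in> S \<Longrightarrow> w i \<le> (\<Sum>i\<in>S. w i)"
    by (rule member_le_sum) (use wnn fS in auto)
  show ?thesis using TT
  proof -
    from TT consider "T = 0" | rho where "0 \<le> T" "sr_covers S ex_x ex_b rho T" by blast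
    then show "T \<le> (\<Sum>i\<in>S. w i)"
    proof cases
      case 1 then show ?thesis using s0 by simp
    next
      case 2
      obtain i where i: "i \<in> S" "0 < rho i" "T \<le> ex_b i / rho i" "\<bar>0 - ex_x i\<bar> \<le> rho i"
        using 2 unfolding sr_covers_def by fastforce
      obtain j where j: "j \<in> S" "0 < rho j" "T \<le> ex_b j / rho j" "\<bar>1 - ex_x j\<bar> \<le> rho j"
        using 2 unfolding sr_covers_def by fastforce
      have i3: "i = 0 \<or> i = 1 \<or> i = 2" and j3: "j = 0 \<or> j = 1 \<or> j = 2" using i(1) j(1) S by auto
      show ?thesis
      proof -
        { assume "i = 1 \<or> i = 2"
          hence "T \<le> 1 / (3/4)" using div_helper[of 1 "3/4" "rho i" T] i by (auto simp: exx exb abs_le_iff split: abs_split)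
          hence ?thesis using wle[OF i(1)] \<open>i = 1 \<or> i = 2\<close> by (auto simp: ww) }
        moreover
        { assume "j = 0"
          hence "T \<le> 2 / (3/4)" using div_helper[of 2 "3/4" "rho j" T] j by (auto simp: exx exb abs_le_iff split: abs_split)
          hence ?thesis using wle[OF j(1)] \<open>j = 0\<close> by (auto simp: ww) }
        moreover
        { assume ij: "i = 0" "j = 1 \<or> j = 2"
          hence "T \<le> 1 / (1/4)" using div_helper[of 1 "1/4" "rho j" T] j by (auto simp: exx exb abs_le_iff split: abs_split)
          moreover have "(\<Sum>k\<in>{i,j}. w k) \<le> (\<Sum>k\<in>S. w k)"
            by (rule sum_mono2) (use fS i j wnn in auto)
          ultimately have ?thesis using ij by (auto simp: ww) }
        ultimately show ?thesis using i3 j3 by blast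
      qed
    qed
  qed
qed

lemma shift_bound:
  assumes S: "S \<subseteq> {..<3}"
  shows "shift_lifetime S ex_x ex_b \<le> (\<Sum>i\<in>S. w i)"
  unfolding shift_lifetime_def
  by (rule cSup_least) (auto intro!: shift_elem_bound[OF S])

lemma duty_bound:
  assumes P: "partition_on {..<3} P"
  shows "duty_cycle_lifetime P ex_x ex_b \<le> 16/3"
proof -
  have U: "\<Union>P = {..<3}" using partition_onD1[OF P] by simp
  have fP: "finite P" using finite_elements[OF _ P] by simp
  have sub: "\<And>S. S \<in> P \<Longrightarrow> S \<subseteq> {..<3}" using U by blast
  have "duty_cycle_lifetime P ex_x ex_b \<le> (\<Sum>S\<in>P. \<Sum>i\<in>S. w i)"
    unfolding duty_cycle_lifetime_def by (rule sum_mono) (use shift_bound sub in auto)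
  also have "\<dots> = (\<Sum>i\<in>\<Union>P. w i)"
  proof -
   have "sum w (\<Union>P) = (sum \<circ> sum) w P"
   proof (rule sum.Union_disjoint)
    show "\<forall>A\<in>P. finite A" using sub finite_subset by blast
    show "\<forall>A\<in>P. \<forall>B\<in>P. A \<noteq> B \<longrightarrow> A \<inter> B = {}"
      using partition_onD2[OF P] by (auto dest: disjointD)
   qed
   thus ?thesis by simp
  qed
  also have "\<dots> = 16/3" unfolding U by (simp add: numeral_3_eq_3 ww)
  finally show ?thesis .
qed

lemma so_lifetime_bound: "so_lifetime 3 ex_x ex_b rho tau \<le> 24"
  unfolding so_lifetime_def by (rule cSup_least) (auto intro: so_bound)

lemma so_opt: "8 \<le> opt_set_once 3 ex_x ex_b"
proof -
  define rho :: "nat \<Rightarrow> real" where "rho = (\<lambda>i. 1/4)"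
  define tau :: "nat \<Rightarrow> real" where "tau = (\<lambda>i. if i = 2 then 4 else 0)"
  have cov: "so_covers 3 ex_x ex_b rho tau 8"
    unfolding so_covers_def
  proof (intro ballI)
    fix t p :: real assume t: "t \<in> {0..8}" and p: "p \<in> {0..1}"
    show "\<exists>i<3. 0 < rho i \<and> \<bar>p - ex_x i\<bar> \<le> rho i \<and> tau i \<le> t \<and> t \<le> tau i + ex_b i / rho i"
    proof (cases "p \<le> 1/2")
      case True thus ?thesis using t p
        by (intro exI[of _ 0]) (auto simp: rho_def tau_def exx exb abs_le_iff split: abs_split)
    next
      case False
      show ?thesis
      proof (cases "t \<le> 4")
        case True thus ?thesis using t p False
          by (intro exI[of _ 1]) (auto simp: rho_def tau_def exx exb abs_le_iff split: abs_split)
      next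
        case False2: False
        thus ?thesis using t p False
          by (intro exI[of _ 2]) (auto simp: rho_def tau_def exx exb abs_le_iff split: abs_split)
      qed
    qed
  qed
  have l: "8 \<le> so_lifetime 3 ex_x ex_b rho tau"
    unfolding so_lifetime_def
  proof (rule cSup_upper)
    show "8 \<in> insert 0 {T. 0 \<le> T \<and> so_covers 3 ex_x ex_b rho tau T}" using cov by simp
    show "bdd_above (insert 0 {T. 0 \<le> T \<and> so_covers 3 ex_x ex_b rho tau T})"
      by (rule bdd_aboveI[of _ 24]) (auto intro: so_bound)
  qed
  have fe: "so_feasible 3 rho tau" by (auto simp: so_feasible_def rho_def tau_def)
  have "so_lifetime 3 ex_x ex_b rho tau \<le> opt_set_once 3 ex_x ex_b"
    unfolding opt_set_once_def
  proof (rule cSup_upper)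
    show "so_lifetime 3 ex_x ex_b rho tau \<in> {so_lifetime 3 ex_x ex_b rho tau |rho tau. so_feasible 3 rho tau}"
      using fe by blast
    show "bdd_above {so_lifetime 3 ex_x ex_b rho tau |rho tau. so_feasible 3 rho tau}"
      by (rule bdd_aboveI[of _ 24]) (auto intro: so_lifetime_bound)
  qed
  thus ?thesis using l by simp
qed

definition ind :: "real \<Rightarrow> real \<Rightarrow> real \<Rightarrow> real" where
  "ind a c t = (if a \<le> t \<and> t < c then 1/4 else 0)"

lemma ind_pc: "piecewise_const (ind a c)"
  unfolding piecewise_const_def
proof (intro exI[of _ "{a,c}"] conjI allI impI)
  fix s t assume "0 \<le> s \<and> s \<le> t \<and> (\<forall>u\<in>{a, c}. \<not> (s < u \<and> u \<le> t))"
  thus "ind a c s = ind a c t" unfolding ind_def by auto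
qed simp

lemma ind_int: assumes "0 \<le> a" "a \<le> c"
  shows "(ind a c has_integral ((c - a) / 4)) {0..}"
proof -
  note has_integral_const_real[of "1/4::real" a c]
  hence h: "((\<lambda>t. if t \<in> {a..c} then 1/4 else 0) has_integral ((c-a)/4)) {0..}"
    using assms by (subst has_integral_restrict) auto
  show ?thesis
    by (rule has_integral_spike[OF negligible_sing[of c] _ h]) (auto simp: ind_def)
qed

lemma sc_lifetime_bound: "sc_feasible 3 ex_b rho \<Longrightarrow> sc_lifetime 3 ex_x rho \<le> 16"
  unfolding sc_lifetime_def by (rule cSup_least) (auto intro: sc_bound)

lemma sc_opt: "8 \<le> opt_strip_cover 3 ex_x ex_b"
proof -
  define rho where "rho = (\<lambda>i::nat. if i = 0 then ind 0 8 else if i = 1 then ind 0 4 else ind 4 8)"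
  have fe: "sc_feasible 3 ex_b rho"
    unfolding sc_feasible_def
  proof (intro allI impI)
    fix i :: nat assume i: "i < 3"
    have "piecewise_const (rho i)" by (simp add: rho_def ind_pc)
    moreover have "\<forall>t\<ge>0. 0 \<le> rho i t" by (simp add: rho_def ind_def)
    moreover have "i = 0 \<or> i = 1 \<or> i = 2" using i by auto
    hence "\<exists>I. (rho i has_integral I) {0..} \<and> I \<le> ex_b i"
      using ind_int[of 0 8] ind_int[of 0 4] ind_int[of 4 8]
      by (auto simp: rho_def exb)
    ultimately show "piecewise_const (rho i) \<and> (\<forall>t\<ge>0. 0 \<le> rho i t) \<and> (\<exists>I. (rho i has_integral I) {0..} \<and> I \<le> ex_b i)" by blast
  qed
  have cov: "sc_covers 3 ex_x rho T" if T: "0 \<le> T" "T < 8" for T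
    unfolding sc_covers_def
  proof (intro ballI)
    fix t p :: real assume t: "t \<in> {0..T}" and p: "p \<in> {0..1}"
    show "\<exists>i<3. \<bar>p - ex_x i\<bar> \<le> rho i t"
    proof (cases "p \<le> 1/2")
      case True thus ?thesis using t p T
        by (intro exI[of _ 0]) (auto simp: rho_def ind_def exx abs_le_iff split: abs_split)
    next
      case False
      show ?thesis
      proof (cases "t < 4")
        case True thus ?thesis using t p False
          by (intro exI[of _ 1]) (auto simp: rho_def ind_def exx abs_le_iff split: abs_split)
      next
        case False2: False
        thus ?thesis using t p False T
          by (intro exI[of _ 2]) (auto simp: rho_def ind_def exx abs_le_iff split: abs_split)
      qed
    qed
  qed
  define X where "X = insert 0 {T. 0 \<le> T \<and> sc_covers 3 ex_x rho T}"
  have bX: "bdd_above X" unfolding X_def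
    by (rule bdd_aboveI[of _ 16]) (auto intro: sc_bound[OF fe])
  have l: "8 \<le> Sup X"
  proof (rule ccontr)
    assume "\<not> 8 \<le> Sup X"
    hence lt: "Sup X < 8" by simp
    have "0 \<le> Sup X" by (rule cSup_upper[OF _ bX]) (simp add: X_def)
    define T where "T = (Sup X + 8) / 2"
    have "T \<in> X" unfolding X_def using cov[of T] lt \<open>0 \<le> Sup X\<close> by (simp add: T_def)
    hence "T \<le> Sup X" by (rule cSup_upper[OF _ bX])
    thus False using lt by (simp add: T_def)
  qed
  have "sc_lifetime 3 ex_x rho \<le> opt_strip_cover 3 ex_x ex_b"
    unfolding opt_strip_cover_def
  proof (rule cSup_upper)
    show "sc_lifetime 3 ex_x rho \<in> {sc_lifetime 3 ex_x rho |rho. sc_feasible 3 ex_b rho}"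
      using fe by blast
    show "bdd_above {sc_lifetime 3 ex_x rho |rho. sc_feasible 3 ex_b rho}"
      by (rule bdd_aboveI[of _ 16]) (auto intro: sc_lifetime_bound)
  qed
  thus ?thesis using l by (simp add: sc_lifetime_def X_def)
qed

lemma main_P: "partition_on {..<3} P \<Longrightarrow>
             3/2 * duty_cycle_lifetime P ex_x ex_b \<le> opt_set_once 3 ex_x ex_b
           \<and> 3/2 * duty_cycle_lifetime P ex_x ex_b \<le> opt_strip_cover 3 ex_x ex_b"
  using duty_bound[of P] so_opt sc_opt by auto

lemma pos_P: "partition_on {..<3::nat} {{..<3}} \<and> 0 < duty_cycle_lifetime {{..<3}} ex_x ex_b"
proof
  have "(0::nat) \<in> {..<3}" by simp
  thus "partition_on {..<3::nat} {{..<3}}" by (intro partition_on_space) blast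
  define rho :: "nat \<Rightarrow> real" where "rho = (\<lambda>i. 3/4)"
  have c: "sr_covers {..<3} ex_x ex_b rho 1"
    unfolding sr_covers_def
  proof (intro ballI)
    fix t p :: real assume "t \<in> {0..1}" "p \<in> {0..1}"
    thus "\<exists>i\<in>{..<3}. 0 < rho i \<and> t \<le> ex_b i / rho i \<and> \<bar>p - ex_x i\<bar> \<le> rho i"
      by (intro bexI[of _ 0]) (auto simp: rho_def exx exb abs_le_iff split: abs_split)
  qed
  have "1 \<le> shift_lifetime {..<3} ex_x ex_b"
    unfolding shift_lifetime_def
  proof (rule cSup_upper)
    show "1 \<in> insert 0 {T. 0 \<le> T \<and> (\<exists>rho. (\<forall>i\<in>{..<3}. 0 \<le> rho i) \<and> sr_covers {..<3} ex_x ex_b rho T)}"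
      using c by (auto intro!: exI[of _ rho] simp: rho_def)
    show "bdd_above (insert 0 {T. 0 \<le> T \<and> (\<exists>rho. (\<forall>i\<in>{..<3}. 0 \<le> rho i) \<and> sr_covers {..<3} ex_x ex_b rho T)})"
      by (rule bdd_aboveI) (rule shift_elem_bound[of "{..<3}"], auto)
  qed
  thus "0 < duty_cycle_lifetime {{..<3}} ex_x ex_b" by (simp add: duty_cycle_lifetime_def)
qed

theorem lemma9:
  "(\<exists>n x b. (\<forall>i<n. 0 \<le> x i \<and> x i \<le> 1 \<and> 0 \<le> b i)
      \<and> (\<exists>P. partition_on {..<n} P \<and> 0 < duty_cycle_lifetime P x b)
      \<and> (\<forall>P. partition_on {..<n} P \<longrightarrow>
             3/2 * duty_cycle_lifetime P x b \<le> opt_set_once n x b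
           \<and> 3/2 * duty_cycle_lifetime P x b \<le> opt_strip_cover n x b))
   \<and> (\<forall>P. partition_on {..<3} P \<longrightarrow>
             3/2 * duty_cycle_lifetime P ex_x ex_b \<le> opt_set_once 3 ex_x ex_b
           \<and> 3/2 * duty_cycle_lifetime P ex_x ex_b \<le> opt_strip_cover 3 ex_x ex_b)"
proof -
  have r: "\<forall>i<3. 0 \<le> ex_x i \<and> ex_x i \<le> 1 \<and> 0 \<le> ex_b i"
    by (auto simp: lt3 exx exb)
  show ?thesis
    using r pos_P main_P by blast
qed

end
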